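(* Let $X$ be a finite set and $\mathcal{F}$ a symmetric clone on $X$ with $r(\mathcal{F})=3$. Let $f^*\in\mathcal{F}_{[3]}$ be not a monarchy and let $\bar a\in X^3$ be without repetition such that $f^*(\bar a')=a'_1$ for every permutation $\bar a'=(a'_1,a'_2,a'_3)$ of $\bar a$, but it is not the case that $f^*(\bar b)=b_1$ for all $\bar b\in X^3$ that are not one-to-one. Then there is $g\in\mathcal{F}_{[3]}$ satisfying (a) or (b): (a) $g(\bar b)=b_1$ for every $\bar b\in X^3$ with a repetition, and $g(\bar a')=a'_2$ for every permutation $\bar a'$ of $\bar a$; (b) $g(\bar b)=g_{3;1,2}(\bar b)$ for every $\bar b\in X^3$ with a repetition, and $g(\bar a')=a'_1$ for every permutation $\bar a'$ of $\bar a$.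
   Context: A clone on $X$: set of finitary operations on $X$ containing all projections and closed under composition; $\mathcal{F}_{[r]}$ its $r$-place members. Symmetric: for $f\in\mathcal{F}_{[n]}$ and a permutation $\pi$ of $X$, $\bar x\mapsto\pi^{-1}(f(\pi x_1,\dots,\pi x_n))$ is in $\mathcal{F}$. A monarchy is a projection. $r(\mathcal{F})=\min\{r:\text{some } f\in\mathcal{F}_{[r]} \text{ is not a monarchy}\}$. $g_{3;1,2}(x_1,x_2,x_3)=x_2$ if $x_2=x_3$, and $x_1$ otherwise. *)

theory Defs
  imports "HOL-Combinatorics.Permutations"
begin

text \<open>An n-place operation on the ground type is represented as a function
  of type (nat => 'a) => 'a depending only on the arguments with index < n.
  A family of operations is given by F :: nat => ((nat => 'a) => 'a) set,
  F n being its n-place members.\<close>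

definition depends_below :: "nat \<Rightarrow> ((nat \<Rightarrow> 'a) \<Rightarrow> 'a) \<Rightarrow> bool" where
  "depends_below n f \<longleftrightarrow> (\<forall>x y. (\<forall>i<n. x i = y i) \<longrightarrow> f x = f y)"

definition is_clone :: "(nat \<Rightarrow> ((nat \<Rightarrow> 'a) \<Rightarrow> 'a) set) \<Rightarrow> bool" where
  "is_clone F \<longleftrightarrow>
     F 0 = {} \<and>
     (\<forall>n. \<forall>f\<in>F n. depends_below n f) \<and>
     (\<forall>n i. 1 \<le> n \<and> i < n \<longrightarrow> (\<lambda>x. x i) \<in> F n) \<and>
     (\<forall>m n f g. 1 \<le> m \<and> 1 \<le> n \<and> f \<in> F m \<and> (\<forall>j<m. g j \<in> F n)
        \<longrightarrow> (\<lambda>x. f (\<lambda>j. g j x)) \<in> F n)"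

definition symmetric_clone :: "(nat \<Rightarrow> ((nat \<Rightarrow> 'a) \<Rightarrow> 'a) set) \<Rightarrow> bool" where
  "symmetric_clone F \<longleftrightarrow>
     (\<forall>n f \<pi>. f \<in> F n \<and> bij \<pi> \<longrightarrow> (\<lambda>x. inv \<pi> (f (\<lambda>i. \<pi> (x i)))) \<in> F n)"

definition monarchy :: "nat \<Rightarrow> ((nat \<Rightarrow> 'a) \<Rightarrow> 'a) \<Rightarrow> bool" where
  "monarchy n f \<longleftrightarrow> (\<exists>i<n. \<forall>x. f x = x i)"

definition r_clone :: "(nat \<Rightarrow> ((nat \<Rightarrow> 'a) \<Rightarrow> 'a) set) \<Rightarrow> nat" where
  "r_clone F = (LEAST r. \<exists>f\<in>F r. \<not> monarchy r f)"

text \<open>g_{3;1,2}, with arguments indexed 0,1,2.\<close>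
definition g312 :: "(nat \<Rightarrow> 'a) \<Rightarrow> 'a" where
  "g312 x = (if x 1 = x 2 then x 1 else x 0)"

end

theory Submission
  imports Defs
begin

definition t3 :: "'a \<Rightarrow> 'a \<Rightarrow> 'a \<Rightarrow> nat \<Rightarrow> 'a" where
  "t3 x y z = (\<lambda>i. if i = 0 then x else if i = 1 then y else z)"

lemma t3_simps[simp]: "t3 x y z 0 = x" "t3 x y z 1 = y" "t3 x y z 2 = z" "t3 x y z (Suc 0) = y"
  by (auto simp: t3_def)

lemma lt3: "(i::nat) < 3 \<longleftrightarrow> i = 0 \<or> i = 1 \<or> i = 2"
  by auto

lemma dep3:
  assumes "is_clone F" "f \<in> F 3"
  shows "f b = f (t3 (b 0) (b 1) (b 2))"
proof -
  have "depends_below 3 f" using assms unfolding is_clone_def by blast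
  then show ?thesis unfolding depends_below_def
    by (metis lt3 t3_simps)
qed

lemma proj3:
  assumes "is_clone F" "i < n"
  shows "(\<lambda>x. x i) \<in> F n"
  using assms unfolding is_clone_def by auto

lemma comp3:
  assumes "is_clone F" "f \<in> F 3" "1 \<le> n" "g0 \<in> F n" "g1 \<in> F n" "g2 \<in> F n"
  shows "(\<lambda>x. f (t3 (g0 x) (g1 x) (g2 x))) \<in> F n"
proof -
  define G where "G = (\<lambda>j::nat. if j = 0 then g0 else if j = 1 then g1 else g2)"
  have "\<forall>j<3. G j \<in> F n" using assms by (auto simp: G_def)
  then have "(\<lambda>x. f (\<lambda>j. G j x)) \<in> F n"
    using assms unfolding is_clone_def by (metis one_le_numeral)
  moreover have "(\<lambda>x. f (\<lambda>j. G j x)) = (\<lambda>x. f (t3 (g0 x) (g1 x) (g2 x)))"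
    apply (rule ext, rule arg_cong[where f=f], rule ext)
    by (simp add: G_def t3_def)
  ultimately show ?thesis by simp
qed

lemma bin_proj:
  assumes "is_clone F" "r_clone F = 3" "h \<in> F 2"
  shows "(\<forall>x y. h (t3 x y y) = x) \<or> (\<forall>x y. h (t3 x y y) = y)"
proof -
  have "monarchy 2 h"
  proof (rule ccontr)
    assume "\<not> monarchy 2 h"
    then have "\<exists>f\<in>F 2. \<not> monarchy 2 f" using assms(3) by blast
    then have "r_clone F \<le> 2" unfolding r_clone_def by (rule Least_le)
    then show False using assms(2) by simp
  qed
  then obtain i where "i < 2" "\<forall>x. h x = x i" unfolding monarchy_def by blast
  moreover have "i = 0 \<or> i = 1" using \<open>i < 2\<close> by auto
  ultimately show ?thesis by auto
qed

lemma patterns: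
  assumes "is_clone F" "r_clone F = 3" "fs \<in> F 3"
  shows "(\<forall>x y. fs (t3 x x y) = x) \<or> (\<forall>x y. fs (t3 x x y) = y)"
    and "(\<forall>x y. fs (t3 x y x) = x) \<or> (\<forall>x y. fs (t3 x y x) = y)"
    and "(\<forall>x y. fs (t3 y x x) = x) \<or> (\<forall>x y. fs (t3 y x x) = y)"
proof -
  have p0: "(\<lambda>x. x 0) \<in> F 2" using proj3[OF assms(1), of 0 2] by simp
  have p1: "(\<lambda>x. x 1) \<in> F 2" using proj3[OF assms(1), of 1 2] by simp
  have "(\<lambda>x. fs (t3 (x 0) (x 0) (x 1))) \<in> F 2"
    by (rule comp3[OF assms(1,3)]) (rule p0 p1 | simp)+
  from bin_proj[OF assms(1,2) this] show "(\<forall>x y. fs (t3 x x y) = x) \<or> (\<forall>x y. fs (t3 x x y) = y)"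
    by simp
  have "(\<lambda>x. fs (t3 (x 0) (x 1) (x 0))) \<in> F 2"
    by (rule comp3[OF assms(1,3)]) (rule p0 p1 | simp)+
  from bin_proj[OF assms(1,2) this] show "(\<forall>x y. fs (t3 x y x) = x) \<or> (\<forall>x y. fs (t3 x y x) = y)"
    by simp
  have "(\<lambda>x. fs (t3 (x 1) (x 0) (x 0))) \<in> F 2"
    by (rule comp3[OF assms(1,3)]) (rule p0 p1 | simp)+
  from bin_proj[OF assms(1,2) this] show "(\<forall>x y. fs (t3 y x x) = x) \<or> (\<forall>x y. fs (t3 y x x) = y)"
    by simp
qed

lemma noninj3: "\<not> inj_on b {0..<3::nat} \<Longrightarrow> b 0 = b 1 \<or> b 0 = b 2 \<or> b 1 = b 2"
  unfolding inj_on_def by (auto simp: lt3)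

lemma perm_one:
  assumes "is_clone F" "fs \<in> F 3"
    and H: "\<forall>\<sigma>. \<sigma> permutes {0..<3} \<longrightarrow> fs (a \<circ> \<sigma>) = a (\<sigma> 0)"
    and s: "\<sigma> permutes {0..<3::nat}" and t: "\<tau> permutes {0..<3}"
  shows "fs (t3 (a (\<sigma> (\<tau> 0))) (a (\<sigma> (\<tau> 1))) (a (\<sigma> (\<tau> 2)))) = a (\<sigma> (\<tau> 0))"
proof -
  have "\<sigma> \<circ> \<tau> permutes {0..<3}" by (rule permutes_compose[OF t s])
  then have "fs (a \<circ> (\<sigma> \<circ> \<tau>)) = a (\<sigma> (\<tau> 0))" using H by simp
  then show ?thesis using dep3[OF assms(1,2), of "a \<circ> (\<sigma> \<circ> \<tau>)"] by simp
qed

lemma perm_facts: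
  assumes "is_clone F" "fs \<in> F 3" "inj_on a {0..<3}"
    and H: "\<forall>\<sigma>. \<sigma> permutes {0..<3} \<longrightarrow> fs (a \<circ> \<sigma>) = a (\<sigma> 0)"
    and s: "\<sigma> permutes {0..<3::nat}"
  shows "fs (t3 (a (\<sigma> 0)) (a (\<sigma> 1)) (a (\<sigma> 2))) = a (\<sigma> 0)"
    "fs (t3 (a (\<sigma> 1)) (a (\<sigma> 0)) (a (\<sigma> 2))) = a (\<sigma> 1)"
    "fs (t3 (a (\<sigma> 2)) (a (\<sigma> 1)) (a (\<sigma> 0))) = a (\<sigma> 2)"
    "fs (t3 (a (\<sigma> 0)) (a (\<sigma> 2)) (a (\<sigma> 1))) = a (\<sigma> 0)"
    "fs (t3 (a (\<sigma> 1)) (a (\<sigma> 2)) (a (\<sigma> 0))) = a (\<sigma> 1)"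
    "fs (t3 (a (\<sigma> 2)) (a (\<sigma> 0)) (a (\<sigma> 1))) = a (\<sigma> 2)"
    "a (\<sigma> 0) \<noteq> a (\<sigma> 1)" "a (\<sigma> 0) \<noteq> a (\<sigma> 2)" "a (\<sigma> 1) \<noteq> a (\<sigma> 2)"
proof -
  note P = perm_one[OF assms(1,2) H s]
  have tr: "\<And>i j. i < 3 \<Longrightarrow> j < 3 \<Longrightarrow> transpose i j permutes {0..<3::nat}"
    by (rule permutes_swap_id) auto
  show "fs (t3 (a (\<sigma> 0)) (a (\<sigma> 1)) (a (\<sigma> 2))) = a (\<sigma> 0)"
    using P[OF permutes_id] by simp
  show "fs (t3 (a (\<sigma> 1)) (a (\<sigma> 0)) (a (\<sigma> 2))) = a (\<sigma> 1)"
    using P[OF tr[of 0 1]] by simp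
  show "fs (t3 (a (\<sigma> 2)) (a (\<sigma> 1)) (a (\<sigma> 0))) = a (\<sigma> 2)"
    using P[OF tr[of 0 2]] by simp
  show "fs (t3 (a (\<sigma> 0)) (a (\<sigma> 2)) (a (\<sigma> 1))) = a (\<sigma> 0)"
    using P[OF tr[of 1 2]] by simp
  show "fs (t3 (a (\<sigma> 1)) (a (\<sigma> 2)) (a (\<sigma> 0))) = a (\<sigma> 1)"
    using P[OF permutes_compose[OF tr[of 1 2] tr[of 0 1]]] by simp
  show "fs (t3 (a (\<sigma> 2)) (a (\<sigma> 0)) (a (\<sigma> 1))) = a (\<sigma> 2)"
    using P[OF permutes_compose[OF tr[of 0 1] tr[of 1 2]]] by simp
  have inj: "inj \<sigma>" using s by (rule permutes_inj)
  have im: "\<And>i. i < 3 \<Longrightarrow> \<sigma> i \<in> {0..<3}" using permutes_in_image[OF s] by simp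
  have d: "\<And>i j. i < 3 \<Longrightarrow> j < 3 \<Longrightarrow> i \<noteq> j \<Longrightarrow> a (\<sigma> i) \<noteq> a (\<sigma> j)"
  proof
    fix i j :: nat assume "i < 3" "j < 3" "i \<noteq> j" "a (\<sigma> i) = a (\<sigma> j)"
    then have "\<sigma> i = \<sigma> j" using assms(3) im by (meson inj_onD)
    then show False using inj \<open>i \<noteq> j\<close> by (meson injD)
  qed
  show "a (\<sigma> 0) \<noteq> a (\<sigma> 1)" "a (\<sigma> 0) \<noteq> a (\<sigma> 2)" "a (\<sigma> 1) \<noteq> a (\<sigma> 2)"
    using d[of 0 1] d[of 0 2] d[of 1 2] by auto
qed


theorem claim2:
  fixes F :: "nat \<Rightarrow> (((nat \<Rightarrow> 'a::finite) \<Rightarrow> 'a) set)"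
    and fs :: "(nat \<Rightarrow> 'a) \<Rightarrow> 'a"
    and a :: "nat \<Rightarrow> 'a"
  assumes "is_clone F" and "symmetric_clone F" and "r_clone F = 3"
    and "fs \<in> F 3" and "\<not> monarchy 3 fs"
    and "inj_on a {0..<3}"
    and "\<forall>\<sigma>. \<sigma> permutes {0..<3} \<longrightarrow> fs (a \<circ> \<sigma>) = a (\<sigma> 0)"
    and "\<not> (\<forall>b. \<not> inj_on b {0..<3} \<longrightarrow> fs b = b 0)"
  shows "\<exists>g\<in>F 3.
     ((\<forall>b. \<not> inj_on b {0..<3} \<longrightarrow> g b = b 0) \<and>
      (\<forall>\<sigma>. \<sigma> permutes {0..<3} \<longrightarrow> g (a \<circ> \<sigma>) = a (\<sigma> 1)))
   \<or> ((\<forall>b. \<not> inj_on b {0..<3} \<longrightarrow> g b = g312 b) \<and>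
      (\<forall>\<sigma>. \<sigma> permutes {0..<3} \<longrightarrow> g (a \<circ> \<sigma>) = a (\<sigma> 0)))"
proof -
  note cl = assms(1) and fsF = assms(4) and inja = assms(6) and H = assms(7)
  have pr: "\<And>i. i < 3 \<Longrightarrow> (\<lambda>x. x i) \<in> F 3" by (rule proj3[OF cl])
  have pr0: "(\<lambda>x. x 0) \<in> F 3" "(\<lambda>x. x 1) \<in> F 3" "(\<lambda>x. x 2) \<in> F 3" by (rule pr, simp)+
  note Q = patterns[OF cl assms(3) fsF]
  have notMMm: "\<not> ((\<forall>x y. fs (t3 x x y) = x) \<and> (\<forall>x y. fs (t3 x y x) = x) \<and> (\<forall>x y. fs (t3 y x x) = y))"
  proof
    assume A: "(\<forall>x y. fs (t3 x x y) = x) \<and> (\<forall>x y. fs (t3 x y x) = x) \<and> (\<forall>x y. fs (t3 y x x) = y)"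
    from assms(8) obtain b where b: "\<not> inj_on b {0..<3}" "fs b \<noteq> b 0" by blast
    from noninj3[OF b(1)] b(2) dep3[OF cl fsF, of b] A show False by (elim disjE) simp_all
  qed
  have case_MMM: "(\<forall>x y. fs (t3 x x y) = x) \<Longrightarrow> (\<forall>x y. fs (t3 x y x) = x) \<Longrightarrow> (\<forall>x y. fs (t3 y x x) = x) \<Longrightarrow> ?thesis"
  proof -
    assume q1: "\<forall>x y. fs (t3 x x y) = x" and q2: "\<forall>x y. fs (t3 x y x) = x" and q3: "\<forall>x y. fs (t3 y x x) = x"
    have mem: "(\<lambda>x. (fs (t3 (x 0) (x 1) (x 2)))) \<in> F 3"
      by (intro comp3[OF cl fsF] pr0) simp_all
    have rep: "\<forall>b::nat\<Rightarrow>_. \<not> inj_on b {0..<3} \<longrightarrow> (\<lambda>x. (fs (t3 (x 0) (x 1) (x 2)))) b = g312 b"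
      apply (intro allI impI, drule noninj3, elim disjE)
      using q1 q2 q3 by (simp_all add: g312_def)
    have per: "\<forall>\<sigma>. \<sigma> permutes {0..<3} \<longrightarrow> (\<lambda>x. (fs (t3 (x 0) (x 1) (x 2)))) (a \<circ> \<sigma>) = a (\<sigma> 0)"
      apply (intro allI impI)
      subgoal premises p using perm_facts[OF cl fsF inja H p] q1 q2 q3 by simp
      done
    show ?thesis
      by (rule bexI[where x="\<lambda>x. (fs (t3 (x 0) (x 1) (x 2)))"], rule disjI2, rule conjI[OF rep per], rule mem)
  qed
  have case_MmM: "(\<forall>x y. fs (t3 x x y) = x) \<Longrightarrow> (\<forall>x y. fs (t3 x y x) = y) \<Longrightarrow> (\<forall>x y. fs (t3 y x x) = x) \<Longrightarrow> ?thesis"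
  proof -
    assume q1: "\<forall>x y. fs (t3 x x y) = x" and q2: "\<forall>x y. fs (t3 x y x) = y" and q3: "\<forall>x y. fs (t3 y x x) = x"
    have mem: "(\<lambda>x. (fs (t3 (x 1) (x 0) (x 2)))) \<in> F 3"
      by (intro comp3[OF cl fsF] pr0) simp_all
    have rep: "\<forall>b::nat\<Rightarrow>_. \<not> inj_on b {0..<3} \<longrightarrow> (\<lambda>x. (fs (t3 (x 1) (x 0) (x 2)))) b = b 0"
      apply (intro allI impI, drule noninj3, elim disjE)
      using q1 q2 q3 by (simp_all add: g312_def)
    have per: "\<forall>\<sigma>. \<sigma> permutes {0..<3} \<longrightarrow> (\<lambda>x. (fs (t3 (x 1) (x 0) (x 2)))) (a \<circ> \<sigma>) = a (\<sigma> 1)"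
      apply (intro allI impI)
      subgoal premises p using perm_facts[OF cl fsF inja H p] q1 q2 q3 by simp
      done
    show ?thesis
      by (rule bexI[where x="\<lambda>x. (fs (t3 (x 1) (x 0) (x 2)))"], rule disjI1, rule conjI[OF rep per], rule mem)
  qed
  have case_Mmm: "(\<forall>x y. fs (t3 x x y) = x) \<Longrightarrow> (\<forall>x y. fs (t3 x y x) = y) \<Longrightarrow> (\<forall>x y. fs (t3 y x x) = y) \<Longrightarrow> ?thesis"
  proof -
    assume q1: "\<forall>x y. fs (t3 x x y) = x" and q2: "\<forall>x y. fs (t3 x y x) = y" and q3: "\<forall>x y. fs (t3 y x x) = y"
    have mem: "(\<lambda>x. (fs (t3 (x 0) (fs (t3 (x 1) (x 0) (x 2))) (fs (t3 (x 0) (x 1) (x 2)))))) \<in> F 3"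
      by (intro comp3[OF cl fsF] pr0) simp_all
    have rep: "\<forall>b::nat\<Rightarrow>_. \<not> inj_on b {0..<3} \<longrightarrow> (\<lambda>x. (fs (t3 (x 0) (fs (t3 (x 1) (x 0) (x 2))) (fs (t3 (x 0) (x 1) (x 2)))))) b = b 0"
      apply (intro allI impI, drule noninj3, elim disjE)
      using q1 q2 q3 by (simp_all add: g312_def)
    have per: "\<forall>\<sigma>. \<sigma> permutes {0..<3} \<longrightarrow> (\<lambda>x. (fs (t3 (x 0) (fs (t3 (x 1) (x 0) (x 2))) (fs (t3 (x 0) (x 1) (x 2)))))) (a \<circ> \<sigma>) = a (\<sigma> 1)"
      apply (intro allI impI)
      subgoal premises p using perm_facts[OF cl fsF inja H p] q1 q2 q3 by simp
      done
    show ?thesis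
      by (rule bexI[where x="\<lambda>x. (fs (t3 (x 0) (fs (t3 (x 1) (x 0) (x 2))) (fs (t3 (x 0) (x 1) (x 2)))))"], rule disjI1, rule conjI[OF rep per], rule mem)
  qed
  have case_mMM: "(\<forall>x y. fs (t3 x x y) = y) \<Longrightarrow> (\<forall>x y. fs (t3 x y x) = x) \<Longrightarrow> (\<forall>x y. fs (t3 y x x) = x) \<Longrightarrow> ?thesis"
  proof -
    assume q1: "\<forall>x y. fs (t3 x x y) = y" and q2: "\<forall>x y. fs (t3 x y x) = x" and q3: "\<forall>x y. fs (t3 y x x) = x"
    have mem: "(\<lambda>x. (fs (t3 (x 1) (x 2) (x 0)))) \<in> F 3"
      by (intro comp3[OF cl fsF] pr0) simp_all
    have rep: "\<forall>b::nat\<Rightarrow>_. \<not> inj_on b {0..<3} \<longrightarrow> (\<lambda>x. (fs (t3 (x 1) (x 2) (x 0)))) b = b 0"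
      apply (intro allI impI, drule noninj3, elim disjE)
      using q1 q2 q3 by (simp_all add: g312_def)
    have per: "\<forall>\<sigma>. \<sigma> permutes {0..<3} \<longrightarrow> (\<lambda>x. (fs (t3 (x 1) (x 2) (x 0)))) (a \<circ> \<sigma>) = a (\<sigma> 1)"
      apply (intro allI impI)
      subgoal premises p using perm_facts[OF cl fsF inja H p] q1 q2 q3 by simp
      done
    show ?thesis
      by (rule bexI[where x="\<lambda>x. (fs (t3 (x 1) (x 2) (x 0)))"], rule disjI1, rule conjI[OF rep per], rule mem)
  qed
  have case_mMm: "(\<forall>x y. fs (t3 x x y) = y) \<Longrightarrow> (\<forall>x y. fs (t3 x y x) = x) \<Longrightarrow> (\<forall>x y. fs (t3 y x x) = y) \<Longrightarrow> ?thesis"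
  proof -
    assume q1: "\<forall>x y. fs (t3 x x y) = y" and q2: "\<forall>x y. fs (t3 x y x) = x" and q3: "\<forall>x y. fs (t3 y x x) = y"
    have mem: "(\<lambda>x. (fs (t3 (x 0) (fs (t3 (x 0) (x 2) (x 1))) (fs (t3 (x 1) (x 2) (x 0)))))) \<in> F 3"
      by (intro comp3[OF cl fsF] pr0) simp_all
    have rep: "\<forall>b::nat\<Rightarrow>_. \<not> inj_on b {0..<3} \<longrightarrow> (\<lambda>x. (fs (t3 (x 0) (fs (t3 (x 0) (x 2) (x 1))) (fs (t3 (x 1) (x 2) (x 0)))))) b = b 0"
      apply (intro allI impI, drule noninj3, elim disjE)
      using q1 q2 q3 by (simp_all add: g312_def)
    have per: "\<forall>\<sigma>. \<sigma> permutes {0..<3} \<longrightarrow> (\<lambda>x. (fs (t3 (x 0) (fs (t3 (x 0) (x 2) (x 1))) (fs (t3 (x 1) (x 2) (x 0)))))) (a \<circ> \<sigma>) = a (\<sigma> 1)"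
      apply (intro allI impI)
      subgoal premises p using perm_facts[OF cl fsF inja H p] q1 q2 q3 by simp
      done
    show ?thesis
      by (rule bexI[where x="\<lambda>x. (fs (t3 (x 0) (fs (t3 (x 0) (x 2) (x 1))) (fs (t3 (x 1) (x 2) (x 0)))))"], rule disjI1, rule conjI[OF rep per], rule mem)
  qed
  have case_mmM: "(\<forall>x y. fs (t3 x x y) = y) \<Longrightarrow> (\<forall>x y. fs (t3 x y x) = y) \<Longrightarrow> (\<forall>x y. fs (t3 y x x) = x) \<Longrightarrow> ?thesis"
  proof -
    assume q1: "\<forall>x y. fs (t3 x x y) = y" and q2: "\<forall>x y. fs (t3 x y x) = y" and q3: "\<forall>x y. fs (t3 y x x) = x"
    have mem: "(\<lambda>x. (fs (t3 (x 1) (x 0) (fs (t3 (x 2) (x 0) (x 1)))))) \<in> F 3"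
      by (intro comp3[OF cl fsF] pr0) simp_all
    have rep: "\<forall>b::nat\<Rightarrow>_. \<not> inj_on b {0..<3} \<longrightarrow> (\<lambda>x. (fs (t3 (x 1) (x 0) (fs (t3 (x 2) (x 0) (x 1)))))) b = b 0"
      apply (intro allI impI, drule noninj3, elim disjE)
      using q1 q2 q3 by (simp_all add: g312_def)
    have per: "\<forall>\<sigma>. \<sigma> permutes {0..<3} \<longrightarrow> (\<lambda>x. (fs (t3 (x 1) (x 0) (fs (t3 (x 2) (x 0) (x 1)))))) (a \<circ> \<sigma>) = a (\<sigma> 1)"
      apply (intro allI impI)
      subgoal premises p using perm_facts[OF cl fsF inja H p] q1 q2 q3 by simp
      done
    show ?thesis
      by (rule bexI[where x="\<lambda>x. (fs (t3 (x 1) (x 0) (fs (t3 (x 2) (x 0) (x 1)))))"], rule disjI1, rule conjI[OF rep per], rule mem)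
  qed
  have case_mmm: "(\<forall>x y. fs (t3 x x y) = y) \<Longrightarrow> (\<forall>x y. fs (t3 x y x) = y) \<Longrightarrow> (\<forall>x y. fs (t3 y x x) = y) \<Longrightarrow> ?thesis"
  proof -
    assume q1: "\<forall>x y. fs (t3 x x y) = y" and q2: "\<forall>x y. fs (t3 x y x) = y" and q3: "\<forall>x y. fs (t3 y x x) = y"
    have mem: "(\<lambda>x. (fs (t3 (x 0) (fs (t3 (x 0) (x 1) (x 2))) (fs (t3 (x 1) (x 0) (x 2)))))) \<in> F 3"
      by (intro comp3[OF cl fsF] pr0) simp_all
    have rep: "\<forall>b::nat\<Rightarrow>_. \<not> inj_on b {0..<3} \<longrightarrow> (\<lambda>x. (fs (t3 (x 0) (fs (t3 (x 0) (x 1) (x 2))) (fs (t3 (x 1) (x 0) (x 2)))))) b = b 0"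
      apply (intro allI impI, drule noninj3, elim disjE)
      using q1 q2 q3 by (simp_all add: g312_def)
    have per: "\<forall>\<sigma>. \<sigma> permutes {0..<3} \<longrightarrow> (\<lambda>x. (fs (t3 (x 0) (fs (t3 (x 0) (x 1) (x 2))) (fs (t3 (x 1) (x 0) (x 2)))))) (a \<circ> \<sigma>) = a (\<sigma> 1)"
      apply (intro allI impI)
      subgoal premises p using perm_facts[OF cl fsF inja H p] q1 q2 q3 by simp
      done
    show ?thesis
      by (rule bexI[where x="\<lambda>x. (fs (t3 (x 0) (fs (t3 (x 0) (x 1) (x 2))) (fs (t3 (x 1) (x 0) (x 2)))))"], rule disjI1, rule conjI[OF rep per], rule mem)
  qed
  show ?thesis
    using Q(1) Q(2) Q(3) notMMm case_MMM case_MmM case_Mmm case_mMM case_mMm case_mmM case_mmm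
    by blast
qed

end
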